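(* For all integers $n_1,n_2\ge0$, \[ \zeta(-2n_1-1,0,-2n_2-1|1)=-\zeta(-2n_1-1,-2n_2-1|1). \]
   Context: Normalized multiple Bernoulli polynomials: for integers $k\ge0$, $\zeta(-k|z)=-\frac{B_{k+1}(z)}{k+1}$ ($B_n(z)$ the Bernoulli polynomials, $B_n=B_n(0)$), and for $r\ge2$, $k_j\ge0$, $\zeta(-k_1,\ldots,-k_r|z)=-\frac{1}{k_r+1}\zeta(-k_1,\ldots,-k_{r-2},-k_{r-1}-k_r-1|z)-\frac12\zeta(-k_1,\ldots,-k_{r-2},-k_{r-1}-k_r|z)+\sum_{q=1}^{k_r}(-k_r)_q\frac{B_{q+1}}{(q+1)!}\zeta(-k_1,\ldots,-k_{r-2},-k_{r-1}-k_r+q|z)$, with $(a)_q=a(a+1)\cdots(a+q-1)$. *)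

theory Defs
  imports Complex_Main
begin

text \<open>Bernoulli numbers with the convention B_n = B_n(0) (so B_1 = -1/2),
  determined by B_0 = 1 and sum_{k=0}^{n} (n+1 choose k) B_k = 0 for n >= 1.
  bern_list n is the list [B_0, ..., B_n].\<close>
primrec bern_list :: "nat \<Rightarrow> real list" where
  "bern_list 0 = [1]"
| "bern_list (Suc n) = bern_list n @
     [- (\<Sum>k\<le>n. real ((n + 2) choose k) * (bern_list n ! k)) / real (n + 2)]"

definition bernoulli :: "nat \<Rightarrow> real" where
  "bernoulli n = last (bern_list n)"

definition bernpoly :: "nat \<Rightarrow> real \<Rightarrow> real" where
  "bernpoly n z = (\<Sum>k\<le>n. real (n choose k) * bernoulli k * z ^ (n - k))"

text \<open>The list argument holds the
  REVERSED list [k_r, k_(r-1), ..., k_1] of the (nonnegative) k_j; the value is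
  zeta(-k_1,...,-k_r | z). The empty list (r = 0) is not used and given value 0.\<close>
fun mzeta_rev :: "nat list \<Rightarrow> real \<Rightarrow> real" where
  "mzeta_rev [] z = 0"
| "mzeta_rev [k] z = - bernpoly (k + 1) z / real (k + 1)"
| "mzeta_rev (b # a # rest) z =
     - (1 / real (b + 1)) * mzeta_rev ((a + b + 1) # rest) z
     - (1 / 2) * mzeta_rev ((a + b) # rest) z
     + (\<Sum>q = 1..b. pochhammer (- real b) q * bernoulli (q + 1) / fact (q + 1)
                     * mzeta_rev ((a + b - q) # rest) z)"

text \<open>mzeta [k_1, ..., k_r] z = zeta(-k_1, ..., -k_r | z).\<close>
definition mzeta :: "nat list \<Rightarrow> real \<Rightarrow> real" where
  "mzeta ks z = mzeta_rev (rev ks) z"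

end

theory Submission imports Defs "HOL-Computational_Algebra.Formal_Power_Series" begin
unbundle fps_syntax

lemma bern_list_length: "length (bern_list n) = Suc n"
  by (induction n) auto

lemma bern_list_prefix: "k \<le> n \<Longrightarrow> bern_list (n + m) ! k = bern_list n ! k"
proof (induction m)
  case (Suc m)
  then show ?case by (simp add: nth_append bern_list_length)
qed simp

lemma bern_list_nth: "k \<le> n \<Longrightarrow> bern_list n ! k = bernoulli k"
proof -
  assume "k \<le> n"
  then obtain m where n: "n = k + m" using le_Suc_ex by blast
  have "bernoulli k = bern_list k ! k"
    unfolding bernoulli_def
    by (subst last_conv_nth) (auto simp: bern_list_length simp flip: length_greater_0_conv)
  then show ?thesis using n bern_list_prefix[of k k m] by simp
qed

lemma bernoulli_0 [simp]: "bernoulli 0 = 1"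
  by (simp add: bernoulli_def)

lemma bernoulli_Suc: "bernoulli (Suc n) = - (\<Sum>k\<le>n. real ((n + 2) choose k) * bernoulli k) / real (n + 2)"
proof -
  have "bernoulli (Suc n) = - (\<Sum>k\<le>n. real ((n + 2) choose k) * (bern_list n ! k)) / real (n + 2)"
    unfolding bernoulli_def by simp
  also have "(\<Sum>k\<le>n. real ((n + 2) choose k) * (bern_list n ! k)) = (\<Sum>k\<le>n. real ((n + 2) choose k) * bernoulli k)"
    by (intro sum.cong) (auto simp: bern_list_nth)
  finally show ?thesis .
qed

lemma bern_rec: "n \<ge> 1 \<Longrightarrow> (\<Sum>k\<le>n. real (Suc n choose k) * bernoulli k) = 0"
proof -
  assume "n \<ge> 1"
  then obtain m where n: "n = Suc m" by (cases n) auto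
  have "(\<Sum>k\<le>n. real (Suc n choose k) * bernoulli k) =
        (\<Sum>k\<le>m. real ((m+2) choose k) * bernoulli k) + real (m+2) * bernoulli (Suc m)"
    by (simp add: n)
  also have "\<dots> = 0" unfolding bernoulli_Suc by simp
  finally show ?thesis .
qed

lemma bernoulli_1: "bernoulli 1 = - 1/2"
  using bernoulli_Suc[of 0] by simp

lemma bernoulli_Suc0: "bernoulli (Suc 0) = - 1/2"
  using bernoulli_1 by simp

lemma bern_egf_coeff:
  fixes c :: real
  shows "(Abs_fps (\<lambda>n. c^n * bernoulli n / fact n) * (fps_exp c - 1)) $ n = (if n = 1 then c else 0)"
proof (cases n)
  case 0
  then show ?thesis by (simp add: fps_mult_nth)
next
  case (Suc m)
  have "(Abs_fps (\<lambda>n. c^n * bernoulli n / fact n) * (fps_exp c - 1)) $ n =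
        (\<Sum>i=0..Suc m. c^i * bernoulli i / fact i * (if Suc m - i = 0 then 0 else c^(Suc m - i) / fact (Suc m - i)))"
    by (simp add: fps_mult_nth Suc)
  also have "\<dots> = (\<Sum>i\<le>m. c^i * bernoulli i / fact i * (c^(Suc m - i) / fact (Suc m - i)))"
    by (simp add: atLeast0AtMost) (rule sum.cong; simp add: field_simps)
  also have "\<dots> = (\<Sum>i\<le>m. c^(Suc m) / fact (Suc m) * (real (Suc m choose i) * bernoulli i))"
  proof (intro sum.cong refl)
    fix i assume "i \<in> {..m}"
    then have i: "i \<le> Suc m" by simp
    have ch: "real (Suc m choose i) = fact (Suc m) / (fact i * fact (Suc m - i))"
      using binomial_fact[OF i, where 'a=real] by simp
    have pw: "c^i * c^(Suc m - i) = c^(Suc m)" using i by (simp flip: power_add)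
    have "c^i * bernoulli i / fact i * (c^(Suc m - i) / fact (Suc m - i)) =
          (c^i * c^(Suc m - i)) * bernoulli i / (fact i * fact (Suc m - i))" by simp
    also have "\<dots> = c^(Suc m) / fact (Suc m) * ((fact (Suc m) / (fact i * fact (Suc m - i))) * bernoulli i)"
      unfolding pw by simp
    finally show "c^i * bernoulli i / fact i * (c^(Suc m - i) / fact (Suc m - i)) =
        c^(Suc m) / fact (Suc m) * (real (Suc m choose i) * bernoulli i)"
      unfolding ch .
  qed
  also have "\<dots> = c^(Suc m) / fact (Suc m) * (\<Sum>i\<le>m. real (Suc m choose i) * bernoulli i)"
    by (simp add: sum_distrib_left)
  also have "\<dots> = (if n = 1 then c else 0)"
  proof (cases "m = 0")
    case True then show ?thesis by (simp add: Suc)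
  next
    case False then show ?thesis using bern_rec[of m] by (simp add: Suc)
  qed
  finally show ?thesis .
qed

lemma bern_egf: "Abs_fps (\<lambda>n. c^n * bernoulli n / fact n) * (fps_exp c - 1) = fps_const (c::real) * fps_X"
  by (rule fps_ext) (simp add: bern_egf_coeff fps_X_def)

lemma bernoulli_odd_eq_0:
  assumes "odd n" "n \<ge> 3"
  shows "bernoulli n = 0"
proof -
  define E where "E = Abs_fps (\<lambda>n. 1^n * bernoulli n / fact n :: real)"
  define E' where "E' = Abs_fps (\<lambda>n. (-1)^n * bernoulli n / fact n :: real)"
  have e1: "E * (fps_exp 1 - 1) = fps_X" using bern_egf[of 1] by (simp add: E_def)
  have m1: "fps_const (-1::real) = -1" by (simp add: fps_eq_iff)
  have e2: "E' * (fps_exp (-1) - 1) = - fps_X" using bern_egf[of "-1"] by (simp add: E'_def m1)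
  have ex: "fps_exp (-1) * fps_exp 1 = (1 :: real fps)"
    by (simp flip: fps_exp_add_mult)
  have "- (E' * (fps_exp (-1) - 1)) * fps_exp 1 = E' * fps_exp 1 - E' * (fps_exp (-1) * fps_exp 1)"
    by (simp add: algebra_simps)
  also have "\<dots> = E' * (fps_exp 1 - 1)" by (simp add: ex right_diff_distrib)
  finally have "E' * (fps_exp 1 - 1) = - (E' * (fps_exp (-1) - 1)) * fps_exp 1" by simp
  also have "\<dots> = E * (fps_exp 1 - 1) * fps_exp 1" using e1 e2 by simp
  finally have "E' * (fps_exp 1 - 1) = (E * fps_exp 1) * (fps_exp 1 - 1)"
    by (simp only: mult.assoc mult.commute[of "fps_exp 1 - 1" "fps_exp 1"])
  moreover have "(fps_exp 1 - 1 :: real fps) \<noteq> 0"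
  proof
    assume "(fps_exp 1 - 1 :: real fps) = 0"
    then have "(fps_exp 1 - 1 :: real fps) $ 1 = 0" by simp
    then show False by simp
  qed
  ultimately have "E' = E * fps_exp 1" by simp
  also have "\<dots> = E + E * (fps_exp 1 - 1)" by (simp add: algebra_simps)
  also have "\<dots> = E + fps_X" using e1 by simp
  finally have "E' $ n = (E + fps_X) $ n" by simp
  then have "(-1)^n * bernoulli n / fact n = bernoulli n / fact n"
    using assms by (simp add: E_def E'_def fps_X_def)
  then show ?thesis using assms by simp
qed

lemma bern_beta: "bernpoly n 1 = (-1)^n * bernoulli n"
proof (cases "n \<le> 1")
  case True
  then consider "n = 0" | "n = 1" by linarith
  then show ?thesis by cases (auto simp: bernpoly_def bernoulli_1 bernoulli_Suc0)
next
  case False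
  then obtain m where n: "n = Suc m" "m \<ge> 1" by (cases n) auto
  have "bernpoly n 1 = (\<Sum>k\<le>m. real (Suc m choose k) * bernoulli k) + bernoulli n"
    by (simp add: bernpoly_def n)
  also have "\<dots> = bernoulli n" using bern_rec[OF n(2)] by simp
  also have "\<dots> = (-1)^n * bernoulli n"
  proof (cases "even n")
    case False
    with n have "3 \<le> n" by presburger
    with False show ?thesis using bernoulli_odd_eq_0[of n] by simp
  qed simp
  finally show ?thesis .
qed

lemma bernpoly_alt: "bernpoly n x = (\<Sum>i\<le>n. real (n choose i) * bernoulli (n - i) * x ^ i)"
  unfolding bernpoly_def
  by (rule sum.reindex_bij_witness[where i="\<lambda>i. n - i" and j="\<lambda>i. n - i"])
     (auto simp: binomial_symmetric[symmetric])

lemma sum_tri_aux: "k \<le> n \<Longrightarrow> (\<Sum>i\<le>n-k. f i) = (\<Sum>i\<le>(n::nat). if k + i \<le> n then f i else 0)"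
  by (rule sum.mono_neutral_cong_left) auto

lemma sum_triangle_swap:
  "(\<Sum>k\<le>n. \<Sum>i\<le>n - k. f k i) = (\<Sum>i\<le>(n::nat). \<Sum>k\<le>n - i. f k i)"
proof -
  have "(\<Sum>k\<le>n. \<Sum>i\<le>n - k. f k i) = (\<Sum>k\<le>n. \<Sum>i\<le>n. if k + i \<le> n then f k i else 0)"
    by (intro sum.cong refl sum_tri_aux) auto
  also have "\<dots> = (\<Sum>i\<le>n. \<Sum>k\<le>n. if k + i \<le> n then f k i else 0)"
    by (rule sum.swap)
  also have "\<dots> = (\<Sum>i\<le>n. \<Sum>k\<le>n - i. f k i)"
    by (intro sum.cong refl sum_tri_aux[symmetric, where f="\<lambda>k. f k _", simplified add.commute]) auto
  finally show ?thesis .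
qed

lemma choose_swap_real:
  assumes "k + i \<le> n"
  shows "real (n choose k) * real ((n - k) choose i) = real (n choose i) * real ((n - i) choose k)"
proof -
  have a: "real (n choose k) = fact n / (fact k * fact (n - k))" using assms by (simp add: binomial_fact)
  have b: "real ((n - k) choose i) = fact (n - k) / (fact i * fact (n - k - i))" using assms by (simp add: binomial_fact)
  have c: "real (n choose i) = fact n / (fact i * fact (n - i))" using assms by (simp add: binomial_fact)
  have d: "real ((n - i) choose k) = fact (n - i) / (fact k * fact (n - i - k))" using assms by (simp add: binomial_fact)
  have e: "n - i - k = n - k - i" by simp
  show ?thesis unfolding a b c d e by (simp add: field_simps)
qed

lemma bernpoly_shift:
  "bernpoly n (y + x) = (\<Sum>i\<le>n. real (n choose i) * x ^ i * bernpoly (n - i) y)"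
proof -
  have "bernpoly n (y + x) = (\<Sum>k\<le>n. \<Sum>i\<le>n - k.
          real (n choose k) * bernoulli k * (real ((n - k) choose i) * x ^ i * y ^ (n - k - i)))"
    unfolding bernpoly_def
    by (intro sum.cong refl) (simp add: binomial_ring[of x y] sum_distrib_left add.commute)
  also have "\<dots> = (\<Sum>i\<le>n. \<Sum>k\<le>n - i.
          real (n choose k) * bernoulli k * (real ((n - k) choose i) * x ^ i * y ^ (n - k - i)))"
    by (rule sum_triangle_swap)
  also have "\<dots> = (\<Sum>i\<le>n. \<Sum>k\<le>n - i.
          real (n choose i) * x ^ i * (real ((n - i) choose k) * bernoulli k * y ^ (n - i - k)))"
  proof (intro sum.cong refl)
    fix i k assume "i \<in> {..n}" "k \<in> {..n - i}"
    then have ki: "k + i \<le> n" by simp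
    have e: "n - i - k = n - k - i" by simp
    show "real (n choose k) * bernoulli k * (real ((n - k) choose i) * x ^ i * y ^ (n - k - i)) =
          real (n choose i) * x ^ i * (real ((n - i) choose k) * bernoulli k * y ^ (n - i - k))"
      using choose_swap_real[OF ki] unfolding e
      by (metis (no_types, lifting) mult.assoc mult.commute mult.left_commute)
  qed
  also have "\<dots> = (\<Sum>i\<le>n. real (n choose i) * x ^ i * bernpoly (n - i) y)"
    unfolding bernpoly_def by (simp add: sum_distrib_left)
  finally show ?thesis .
qed

lemma bernpoly_diff: "n \<ge> 1 \<Longrightarrow> bernpoly n (x + 1) - bernpoly n x = real n * x ^ (n - 1)"
proof -
  assume n: "n \<ge> 1"
  have "bernpoly n (x + 1) - bernpoly n x =
     (\<Sum>i\<le>n. real (n choose i) * x ^ i * ((-1)^(n-i) * bernoulli (n - i) - bernoulli (n - i)))"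
    using bernpoly_shift[of n 1 x] unfolding bernpoly_alt[of n x]
    by (simp add: bern_beta add.commute sum_subtractf algebra_simps)
  also have "\<dots> = (\<Sum>i\<in>{n-1}. real (n choose i) * x ^ i * ((-1)^(n-i) * bernoulli (n - i) - bernoulli (n - i)))"
  proof (rule sum.mono_neutral_right)
    show "\<forall>i\<in>{..n} - {n - 1}. real (n choose i) * x ^ i * ((-1)^(n-i) * bernoulli (n - i) - bernoulli (n - i)) = 0"
    proof
      fix i assume i: "i \<in> {..n} - {n - 1}"
      show "real (n choose i) * x ^ i * ((-1)^(n-i) * bernoulli (n - i) - bernoulli (n - i)) = 0"
      proof (cases "even (n - i)")
        case False
        have "n - i \<noteq> 1" using i n by auto
        with False have "n - i \<ge> 3" by presburger
        then show ?thesis using bernoulli_odd_eq_0[of "n - i"] False by simp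
      qed simp
    qed
  qed (use n in auto)
  also have "\<dots> = real n * x ^ (n - 1)"
    using n binomial_symmetric[of 1 n] by (simp add: bernoulli_Suc0)
  finally show ?thesis .
qed

lemma bernpoly_refl: "bernpoly n (1 - x) = (-1)^n * bernpoly n x"
proof -
  have "bernpoly n (1 - x) = (\<Sum>i\<le>n. real (n choose i) * (-x) ^ i * ((-1)^(n-i) * bernoulli (n - i)))"
    using bernpoly_shift[of n 1 "-x"] by (simp add: bern_beta)
  also have "\<dots> = (\<Sum>i\<le>n. (-1)^n * (real (n choose i) * bernoulli (n - i) * x ^ i))"
  proof (intro sum.cong refl)
    fix i assume "i \<in> {..n}"
    then have "(-1::real)^i * (-1)^(n-i) = (-1)^n" by (simp flip: power_add)
    then show "real (n choose i) * (-x) ^ i * ((-1)^(n-i) * bernoulli (n - i)) =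
          (-1)^n * (real (n choose i) * bernoulli (n - i) * x ^ i)"
      by (simp add: power_minus[of x] algebra_simps)
  qed
  also have "\<dots> = (-1)^n * bernpoly n x" by (simp add: bernpoly_alt sum_distrib_left)
  finally show ?thesis .
qed


lemma poch_coeff:
  assumes "q \<le> k"
  shows "pochhammer (- real k) q / fact (q + 1) = (-1)^q * real (Suc k choose Suc q) / real (Suc k)"
proof -
  have "pochhammer (- real k) q = (-1)^q * (real k gchoose q) * fact q"
    by (simp add: gbinomial_pochhammer)
  also have "real k gchoose q = real (k choose q)" by (simp add: binomial_gbinomial)
  finally have p: "pochhammer (- real k) q = (-1)^q * real (k choose q) * fact q" .
  have c: "real (Suc k) * real (k choose q) = real (Suc k choose Suc q) * real (Suc q)"
    using Suc_times_binomial_eq[of k q] by (metis of_nat_mult)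
  have d: "real (k choose q) / real (Suc q) = real (Suc k choose Suc q) / real (Suc k)"
    using c by (simp add: field_simps del: of_nat_Suc binomial_Suc_Suc)
  have f: "(fact (q + 1) :: real) = real (Suc q) * fact q" by simp
  have "pochhammer (- real k) q / fact (q + 1) = (-1)^q * (real (k choose q) / real (Suc q))"
    unfolding p f by (simp del: of_nat_Suc)
  then show ?thesis unfolding d by simp
qed

lemma mzeta_rev_step:
  "mzeta_rev (k # a # rest) z = - 1 / real (k + 1) *
     (\<Sum>j\<le>k+1. real ((k+1) choose j) * bernpoly (k + 1 - j) 1 * mzeta_rev ((a + j) # rest) z)"
proof -
  define M where "M j = mzeta_rev ((a + j) # rest) z" for j
  have "(\<Sum>j\<le>k+1. real ((k+1) choose j) * bernpoly (k + 1 - j) 1 * M j) =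
        (\<Sum>j<k. real ((k+1) choose j) * bernpoly (k + 1 - j) 1 * M j) + real (k+1) * (1/2) * M k + M (k+1)"
  proof -
    have e: "{..k+1} = insert (k+1) (insert k {..<k})" by auto
    have b1: "bernpoly 1 1 = 1/2" by (simp add: bernpoly_def bernoulli_Suc0)
    have b0: "bernpoly 0 1 = 1" by (simp add: bernpoly_def)
    show ?thesis unfolding e using b0 b1 by (simp add: algebra_simps)
  qed
  also have "(\<Sum>j<k. real ((k+1) choose j) * bernpoly (k + 1 - j) 1 * M j) =
        (\<Sum>q=1..k. real ((k+1) choose (k - q)) * bernpoly (q + 1) 1 * M (k - q))"
    by (rule sum.reindex_bij_witness[where i="\<lambda>q. k - q" and j="\<lambda>j. k - j"]) (auto simp: Suc_diff_le)
  also have "\<dots> = (\<Sum>q=1..k. - real (k + 1) * (pochhammer (- real k) q * bernoulli (q + 1) / fact (q + 1) * M (k - q)))"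
  proof (intro sum.cong refl)
    fix q assume q: "q \<in> {1..k}"
    have "(k+1) choose (k - q) = (k+1) choose (q + 1)"
      using q binomial_symmetric[of "q+1" "k+1"] by simp
    then show "real ((k+1) choose (k - q)) * bernpoly (q + 1) 1 * M (k - q) =
       - real (k + 1) * (pochhammer (- real k) q * bernoulli (q + 1) / fact (q + 1) * M (k - q))"
    proof -
      have P: "pochhammer (- real k) q * bernoulli (q + 1) / fact (q + 1) * M (k - q) =
          (pochhammer (- real k) q / fact (q + 1)) * bernoulli (q + 1) * M (k - q)" by simp
      have Q: "bernpoly (q + 1) 1 = - ((-1)^q * bernoulli (q + 1))" by (simp add: bern_beta)
      have qk: "q \<le> k" using q by simp
      show ?thesis unfolding P poch_coeff[OF qk] Q \<open>(k+1) choose (k - q) = (k+1) choose (q + 1)\<close>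
        using q by (simp add: field_simps del: of_nat_Suc binomial_Suc_Suc)
    qed
  qed
  finally have *: "(\<Sum>j\<le>k+1. real ((k+1) choose j) * bernpoly (k + 1 - j) 1 * M j) =
     - real (k + 1) * (\<Sum>q=1..k. pochhammer (- real k) q * bernoulli (q + 1) / fact (q + 1) * M (k - q))
     + real (k+1) * (1/2) * M k + M (k+1)"
    by (simp add: sum_distrib_left)
  have "mzeta_rev (k # a # rest) z = - (1 / real (k + 1)) * M (k + 1) - (1/2) * M k
     + (\<Sum>q=1..k. pochhammer (- real k) q * bernoulli (q + 1) / fact (q + 1) * M (k - q))"
    by (simp add: M_def add.commute add.left_commute)
  also have "\<dots> = - 1 / real (k + 1) * (\<Sum>j\<le>k+1. real ((k+1) choose j) * bernpoly (k + 1 - j) 1 * M j)"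
    unfolding * by (simp add: field_simps del: of_nat_Suc)
  finally show ?thesis by (simp add: M_def)
qed

lemma bern_sign: "((-1)^m - 1) * bernoulli m = (if m = 1 then 1 else 0)"
proof (cases "even m")
  case True then show ?thesis by auto
next
  case False
  show ?thesis
  proof (cases "m = 1")
    case True then show ?thesis by (simp add: bernoulli_Suc0)
  next
    case m: False
    with False have "m \<ge> 3" by presburger
    then show ?thesis using bernoulli_odd_eq_0[of m] False m by simp
  qed
qed

definition PhiE :: "(nat \<Rightarrow> real) \<Rightarrow> nat \<Rightarrow> real \<Rightarrow> real" where
  "PhiE c N x = (\<Sum>i\<le>N. c i * bernpoly (i + 1) x / real (i + 1))"

lemma PhiE_shift: "PhiE c N (x + 1) = PhiE c N x + (\<Sum>i\<le>N. c i * x ^ i)"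
proof -
  have "PhiE c N (x + 1) = (\<Sum>i\<le>N. c i * bernpoly (i + 1) x / real (i + 1) + c i * x ^ i)"
    unfolding PhiE_def
  proof (intro sum.cong refl)
    fix i
    have "bernpoly (i + 1) (x + 1) = bernpoly (i + 1) x + real (i + 1) * x ^ i"
      using bernpoly_diff[of "i + 1" x] by simp
    then show "c i * bernpoly (i + 1) (x + 1) / real (i + 1) =
          c i * bernpoly (i + 1) x / real (i + 1) + c i * x ^ i"
      by (simp add: field_simps del: of_nat_Suc)
  qed
  then show ?thesis by (simp add: sum.distrib PhiE_def)
qed

lemma PhiE_refl: "PhiE c N (1 - x) = - PhiE (\<lambda>i. (-1)^i * c i) N x"
  unfolding PhiE_def by (simp add: bernpoly_refl flip: sum_negf) (intro sum.cong refl; simp add: ac_simps)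

lemma PhiE_even:
  assumes "\<forall>i\<le>N. (-1)^i * c i = c i"
  shows "PhiE c N 1 = c 0 / 2"
proof -
  have "PhiE c N 1 = - PhiE (\<lambda>i. (-1)^i * c i) N 0" using PhiE_refl[of c N 0] by simp
  also have "PhiE (\<lambda>i. (-1)^i * c i) N 0 = PhiE c N 0"
    unfolding PhiE_def using assms by (intro sum.cong) auto
  finally have 1: "PhiE c N 1 = - PhiE c N 0" .
  have "PhiE c N 1 = PhiE c N 0 + (\<Sum>i\<le>N. c i * 0 ^ i)" using PhiE_shift[of c N 0] by simp
  also have "(\<Sum>i\<le>N. c i * 0 ^ i) = c 0"
    by (subst sum.mono_neutral_right[of "{..N}" "{0}"]) auto
  finally show ?thesis using 1 by simp
qed

lemma sum_shift_window:
  fixes a K M :: nat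
  assumes "a + K \<le> M"
  shows "(\<Sum>n\<le>M. if a \<le> n \<and> n - a \<le> K then f (n - a) else 0) = (\<Sum>i\<le>K. (f i :: real))"
proof -
  have "(\<Sum>n\<le>M. if a \<le> n \<and> n - a \<le> K then f (n - a) else 0) = (\<Sum>n\<in>{a..a+K}. f (n - a))"
    using assms by (intro sum.mono_neutral_cong_right) auto
  also have "\<dots> = (\<Sum>i\<le>K. f i)"
    by (rule sum.reindex_bij_witness[where i="\<lambda>i. i + a" and j="\<lambda>n. n - a"]) auto
  finally show ?thesis .
qed


theorem main:
  fixes a b :: nat
  assumes a: "odd a" and b: "odd b"
  shows "mzeta_rev [b, 0, a] 1 = - mzeta_rev [b, a] 1"
proof -
  define cB where "cB j = real ((b+1) choose j) * bernoulli (b + 1 - j)" for j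
  define H where "H y = PhiE cB (b+1) y" for y
  define M where "M = a + b + 2"
  define inner where "inner j n = (if a \<le> n \<and> n - a \<le> j + 1 then
      real ((j+1) choose (n - a)) * bernpoly (j + 1 - (n - a)) 1 / real (j+1) else 0)" for j n
  define g where "g n = (\<Sum>j\<le>b+1. cB j * inner j n)" for n
  define Y where "Y j = mzeta_rev [j, a] 1" for j
  have bpB: "(\<Sum>j\<le>b+1. cB j * x^j) = bernpoly (b+1) x" for x
    unfolding cB_def bernpoly_alt[of "b+1" x] by simp
  have window: "(\<Sum>n\<le>M. inner j n * h n) =
      (\<Sum>i\<le>j+1. real ((j+1) choose i) * bernpoly (j + 1 - i) 1 / real (j+1) * h (a + i))"
    if j: "j \<le> b + 1" for j and h :: "nat \<Rightarrow> real"
  proof -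
    have "(\<Sum>n\<le>M. inner j n * h n) = (\<Sum>n\<le>M. if a \<le> n \<and> n - a \<le> j + 1 then
         (\<lambda>i. real ((j+1) choose i) * bernpoly (j + 1 - i) 1 / real (j+1) * h (a + i)) (n - a) else 0)"
      unfolding inner_def by (intro sum.cong refl) auto
    also have "\<dots> = (\<Sum>i\<le>j+1. real ((j+1) choose i) * bernpoly (j + 1 - i) 1 / real (j+1) * h (a + i))"
      by (rule sum_shift_window) (use j in \<open>simp add: M_def\<close>)
    finally show ?thesis .
  qed
  have gsum: "(\<Sum>n\<le>M. g n * h n) = (\<Sum>j\<le>b+1. cB j * (\<Sum>n\<le>M. inner j n * h n))" for h :: "nat \<Rightarrow> real"
  proof -
    have "(\<Sum>n\<le>M. g n * h n) = (\<Sum>n\<le>M. \<Sum>j\<le>b+1. cB j * (inner j n * h n))"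
      unfolding g_def sum_distrib_right by (simp add: mult.assoc)
    also have "\<dots> = (\<Sum>j\<le>b+1. \<Sum>n\<le>M. cB j * (inner j n * h n))" by (rule sum.swap)
    finally show ?thesis by (simp add: sum_distrib_left)
  qed
  have Y: "Y j = (\<Sum>i\<le>j+1. real ((j+1) choose i) * bernpoly (j+1-i) 1 / real (j+1) *
              (bernpoly (a+i+1) 1 / real (a+i+1)))" for j
  proof -
    have "Y j = - 1 / real (j + 1) *
     (\<Sum>i\<le>j+1. real ((j+1) choose i) * bernpoly (j + 1 - i) 1 * mzeta_rev [a + i] 1)"
      unfolding Y_def by (rule mzeta_rev_step)
    also have "\<dots> = (\<Sum>i\<le>j+1. - 1 / real (j + 1) * (real ((j+1) choose i) * bernpoly (j + 1 - i) 1 * mzeta_rev [a + i] 1))"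
      by (rule sum_distrib_left)
    also have "\<dots> = (\<Sum>i\<le>j+1. real ((j+1) choose i) * bernpoly (j+1-i) 1 / real (j+1) *
              (bernpoly (a+i+1) 1 / real (a+i+1)))"
      by (rule sum.cong[OF refl]) (simp only: mzeta_rev.simps, simp add: field_simps del: of_nat_Suc)
    finally show ?thesis .
  qed
  have E2: "PhiE g M 1 = (\<Sum>j\<le>b+1. cB j * Y j)"
  proof -
    have "PhiE g M 1 = (\<Sum>n\<le>M. g n * (bernpoly (n + 1) 1 / real (n + 1)))"
      unfolding PhiE_def by simp
    also have "\<dots> = (\<Sum>j\<le>b+1. cB j * Y j)"
      unfolding gsum
    proof (intro sum.cong refl)
      fix j assume "j \<in> {..b+1}"
      then have j: "j \<le> b + 1" by simp
      show "cB j * (\<Sum>n\<le>M. inner j n * (bernpoly (n + 1) 1 / real (n + 1))) = cB j * Y j"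
        unfolding window[OF j, of "\<lambda>n. bernpoly (n + 1) 1 / real (n + 1)"] Y[of j] by simp
    qed
    finally show ?thesis .
  qed
  have E1: "(\<Sum>n\<le>M. g n * x ^ n) = x ^ a * H (x + 1)" for x
  proof -
    have "(\<Sum>n\<le>M. g n * x ^ n) = (\<Sum>j\<le>b+1. cB j * (x ^ a * (bernpoly (j + 1) (1 + x) / real (j + 1))))"
      unfolding gsum
    proof (intro sum.cong refl)
      fix j assume "j \<in> {..b+1}"
      then have j: "j \<le> b + 1" by simp
      show "cB j * (\<Sum>n\<le>M. inner j n * x ^ n) = cB j * (x ^ a * (bernpoly (j + 1) (1 + x) / real (j + 1)))"
        unfolding window[OF j] bernpoly_shift[of "j+1" 1 x]
        by (simp add: sum_distrib_left sum_divide_distrib power_add del: sum.atMost_Suc atMost_Suc)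
           (intro sum.cong refl; simp add: field_simps)
    qed
    also have "\<dots> = x ^ a * H (x + 1)"
      unfolding H_def PhiE_def by (simp add: sum_distrib_left add.commute mult.left_commute del: sum.atMost_Suc atMost_Suc)
    finally show ?thesis .
  qed
  have Hr: "H (1 - x) = - H (x + 1)" for x
  proof -
    have cc: "(-1)^i * cB i = cB i + (if i = b then real (b + 1) else 0)" if i: "i \<le> b + 1" for i
    proof -
      have s: "(-1::real)^i = (-1)^(b + 1 - i)"
      proof -
        have "even (b + 1)" using b by simp
        then have "even i \<longleftrightarrow> even (b + 1 - i)" using i by (auto simp: even_diff_nat)
        then show ?thesis by (cases "even i") auto
      qed
      have "(-1)^i * cB i - cB i = real ((b+1) choose i) * (((-1)^(b + 1 - i) - 1) * bernoulli (b + 1 - i))"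
        unfolding cB_def s by (simp add: algebra_simps)
      also have "\<dots> = (if i = b then real (b + 1) else 0)"
        unfolding bern_sign using i by auto
      finally show ?thesis by simp
    qed
    have "PhiE (\<lambda>i. (-1)^i * cB i) (b+1) x =
        (\<Sum>i\<le>b+1. cB i * bernpoly (i + 1) x / real (i + 1) +
           (if i = b then real (b + 1) else 0) * bernpoly (i + 1) x / real (i + 1))"
      unfolding PhiE_def by (intro sum.cong refl) (simp add: cc add_divide_distrib distrib_right)
    also have "\<dots> = H x + bernpoly (b + 1) x"
    proof -
      have "(\<Sum>i\<le>b+1. (if i = b then real (b + 1) else 0) * bernpoly (i + 1) x / real (i + 1)) =
            (\<Sum>i\<le>b+1. if i = b then bernpoly (b + 1) x else 0)"
        by (intro sum.cong refl) auto
      also have "\<dots> = bernpoly (b + 1) x" by (simp del: sum.atMost_Suc atMost_Suc)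
      finally show ?thesis by (simp only: sum.distrib H_def PhiE_def)
    qed
    also have "\<dots> = H (x + 1)"
      unfolding H_def PhiE_shift bpB[symmetric] ..
    finally have "PhiE (\<lambda>i. (-1)^i * cB i) (b+1) x = H (x + 1)" .
    then show ?thesis unfolding H_def PhiE_refl by simp
  qed
  have ev: "\<forall>n\<le>M. (-1)^n * g n = g n"
  proof -
    have "(\<Sum>n\<le>M. ((-1)^n * g n) * x ^ n) = (\<Sum>n\<le>M. g n * x ^ n)" for x
    proof -
      have "(\<Sum>n\<le>M. ((-1)^n * g n) * x ^ n) = (\<Sum>n\<le>M. g n * (-x) ^ n)"
        by (intro sum.cong refl) (simp add: power_minus[of x])
      also have "\<dots> = (-x) ^ a * H (-x + 1)" by (rule E1)
      also have "\<dots> = x ^ a * H (x + 1)"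
        using a Hr[of x] by (simp add: power_minus_odd)
      also have "\<dots> = (\<Sum>n\<le>M. g n * x ^ n)" by (rule E1[symmetric])
      finally show ?thesis .
    qed
    then show ?thesis using polyfun_eq_coeffs[of "\<lambda>n. (-1)^n * g n" M g] by blast
  qed
  have g0: "g 0 = 0"
  proof -
    have "a \<noteq> 0" using a by (metis even_zero)
    then show ?thesis by (simp add: g_def inner_def)
  qed
  have Phi0: "PhiE g M 1 = 0" using PhiE_even[OF ev] g0 by simp
  have L: "mzeta_rev [b, 0, a] 1 = - 1 / real (b + 1) *
      (\<Sum>j\<le>b+1. real ((b+1) choose j) * bernpoly (b + 1 - j) 1 * Y j)"
    unfolding mzeta_rev_step[of b 0 "[a]"] Y_def by simp
  have D: "(\<Sum>j\<le>b+1. real ((b+1) choose j) * bernpoly (b + 1 - j) 1 * Y j) =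
        (\<Sum>j\<le>b+1. cB j * Y j) + real (b + 1) * Y b"
  proof -
    have "(\<Sum>j\<le>b+1. real ((b+1) choose j) * bernpoly (b + 1 - j) 1 * Y j) - (\<Sum>j\<le>b+1. cB j * Y j) =
          (\<Sum>j\<le>b+1. real ((b+1) choose j) * (((-1)^(b + 1 - j) - 1) * bernoulli (b + 1 - j)) * Y j)"
      unfolding cB_def bern_beta by (simp add: sum_subtractf[symmetric] algebra_simps)
    also have "\<dots> = (\<Sum>j\<le>b+1. if j = b then real (b + 1) * Y j else 0)"
      unfolding bern_sign by (intro sum.cong refl) auto
    also have "\<dots> = real (b + 1) * Y b" by simp
    finally show ?thesis by simp
  qed
  have "mzeta_rev [b, 0, a] 1 = - 1 / real (b + 1) * (PhiE g M 1 + real (b + 1) * Y b)"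
    unfolding L D E2 ..
  also have "\<dots> = - Y b" unfolding Phi0 by (simp del: of_nat_Suc)
  finally show ?thesis by (simp only: Y_def)
qed

theorem proposition3p5:
  fixes n1 n2 :: nat
  shows "mzeta [2 * n1 + 1, 0, 2 * n2 + 1] 1 = - mzeta [2 * n1 + 1, 2 * n2 + 1] 1"
  unfolding mzeta_def using main[of "2 * n1 + 1" "2 * n2 + 1"] by simp

end
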